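(* Fix $\lambda\ge0$, $n,m\ge1$, $N=n+m$, points $Z_1,\dots,Z_N\in\mathcal Z=\mathcal X\times\mathcal W$ and responses $Y_1,\dots,Y_n$. In the setting and notation described in the context (Hilbert space $\bar{\mathcal K}$ with inner product $\langle\cdot,\cdot\rangle_\star$, embedded dictionaries $\mathcal D_f^\star,\mathcal D_g^\star$, and the iterates of Algorithm 1), for every $k\ge1$, $$A_k:=\sup_{a\in\mathcal D_f^\star}\langle r_k,a\rangle_\star\le R_\lambda\alpha_k,\qquad B_k:=\sup_{b\in\mathcal D_g^\star}\langle r_k,b\rangle_\star\le R_\lambda\alpha_k+R_\lambda\beta_k,$$ where $R_\lambda=\max\{1,\sqrt\lambda\}$.
   Context: Let $\hat P^{(1)}=\frac1N\sum_{i=1}^n\delta_{Z_i}$, $\hat P^{(2)}=\frac1N\sum_{j=n+1}^N\delta_{Z_j}$, $\hat P^{(3)}=\lambda\hat P^{(1)}$, and $\hat P_N^Z=\hat P^{(1)}+\hat P^{(2)}$. For pairs $u=(u_1,u_2)$, $v=(v_1,v_2)$ of real functions on $\{Z_1,\dots,Z_N\}$ define $\langle u,v\rangle_\star=\langle u_1,v_1\rangle_{L^2(\hat P^{(1)})}+\langle u_1-u_2,v_1-v_2\rangle_{L^2(\hat P^{(2)})}+\langle u_2,v_2\rangle_{L^2(\hat P^{(3)})}$; this is positive semidefinite, and $\bar{\mathcal K}$ is the quotient by its null space (all projections, norms $\|\cdot\|_\star$, orthogonality below are in $\bar{\mathcal K}$). Let $Y$ be any extension of the labels to all $N$ points and $T=(Y,Y)$.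 Let $\mathcal D_f$ be a finite dictionary of functions of $x$ (viewed on $\mathcal Z$) and $\mathcal D_g$ a finite dictionary of functions on $\mathcal Z$, all with $\|\cdot\|_{L^2(\hat P_N^Z)}\le1$; set $\mathcal D_f^\star=\{(\psi,0):\psi\in\mathcal D_f\}$, $\mathcal D_g^\star=\{(0,\phi):\phi\in\mathcal D_g\}$, and assume $\mathcal D_f^\star\cup\mathcal D_g^\star$ is closed under negation. Algorithm 1: set $(f_0,g_0)=(0,0)$, $S_0^f=S_0^g=\{0\}$; for $k=1,2,\dots$: $r_k=T-(f_{k-1},g_{k-1})$; choose $\psi_k^\star=(\psi_k,0)\in\arg\max\{\langle r_k,\Pi^\perp_{S_{k-1}^f}a\rangle_\star/\|\Pi^\perp_{S_{k-1}^f}a\|_\star: a\in\mathcal D_f^\star,\ \|\Pi^\perp_{S_{k-1}^f}a\|_\star>0\}$; set $S_k^f=\mathrm{span}(\psi_1^\star,\dots,\psi_k^\star)$, $(f_k,g_{k-1})=(f_{k-1},g_{k-1})+\Pi_{S_k^f}r_k$, $r_k^{(g)}=r_k-\Pi_{S_k^f}r_k$; choose $\phi_k^\star=(0,\phi_k)\in\arg\max\{\langle r_k^{(g)},\Pi^\perp_{S_{k-1}^g}b\rangle_\star/\|\Pi^\perp_{S_{k-1}^g}b\|_\star: b\in\mathcal D_g^\star,\ \|\Pi^\perp_{S_{k-1}^g}b\|_\star>0\}$; set $S_k^g=\mathrm{span}(\phi_1^\star,\dots,\phi_k^\star)$ and $(f_k,g_k)=(f_k,g_{k-1})+\Pi_{S_k^g}r_k^{(g)}$.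 Here $\Pi_S$, $\Pi_S^\perp$ are orthogonal projections onto $S$ and its orthogonal complement. Define $\alpha_k=\|\Pi_{S_k^f}r_k\|_\star$ and $\beta_k=\|\Pi_{S_k^g}r_k^{(g)}\|_\star$. *)

theory Defs
  imports "HOL-Analysis.Analysis"
begin

text \<open>Elements of the (pre-)Hilbert space: pairs u = (u1,u2) of real functions on the
sample space 'z.  Only their values at the sample points Z 0, ..., Z (N-1) matter.
The first n points are the labelled ones (hat P^(1)), the points n..N-1 are the
unlabelled ones (hat P^(2)), and hat P^(3) = lam * hat P^(1).\<close>

type_synonym 'z elt = "('z \<Rightarrow> real) \<times> ('z \<Rightarrow> real)"

definition padd :: "'z elt \<Rightarrow> 'z elt \<Rightarrow> 'z elt" where
  "padd u v = ((\<lambda>z. fst u z + fst v z), (\<lambda>z. snd u z + snd v z))"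

definition psub :: "'z elt \<Rightarrow> 'z elt \<Rightarrow> 'z elt" where
  "psub u v = ((\<lambda>z. fst u z - fst v z), (\<lambda>z. snd u z - snd v z))"

definition pzero :: "'z elt" where
  "pzero = ((\<lambda>z. 0), (\<lambda>z. 0))"

definition ipS :: "nat \<Rightarrow> nat \<Rightarrow> real \<Rightarrow> (nat \<Rightarrow> 'z) \<Rightarrow> 'z elt \<Rightarrow> 'z elt \<Rightarrow> real" where
  "ipS n N lam Z u v =
     (1 / real N) * (\<Sum>i<n. fst u (Z i) * fst v (Z i))
   + (1 / real N) * (\<Sum>j\<in>{n..<N}. (fst u (Z j) - snd u (Z j)) * (fst v (Z j) - snd v (Z j)))
   + lam * ((1 / real N) * (\<Sum>i<n. snd u (Z i) * snd v (Z i)))"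

definition normS :: "nat \<Rightarrow> nat \<Rightarrow> real \<Rightarrow> (nat \<Rightarrow> 'z) \<Rightarrow> 'z elt \<Rightarrow> real" where
  "normS n N lam Z u = sqrt (ipS n N lam Z u u)"

definition lincomb :: "(nat \<Rightarrow> real) \<Rightarrow> 'z elt list \<Rightarrow> 'z elt" where
  "lincomb c vs = ((\<lambda>z. \<Sum>i<length vs. c i * fst (vs ! i) z),
                   (\<lambda>z. \<Sum>i<length vs. c i * snd (vs ! i) z))"

definition spanL :: "'z elt list \<Rightarrow> 'z elt set" where
  "spanL vs = {p. \<exists>c. p = lincomb c vs}"

text \<open>In the quotient space this is unique; we pick a
representative.\<close>
definition isProj :: "nat \<Rightarrow> nat \<Rightarrow> real \<Rightarrow> (nat \<Rightarrow> 'z) \<Rightarrow> 'z elt set \<Rightarrow> 'z elt \<Rightarrow> 'z elt \<Rightarrow> bool" where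
  "isProj n N lam Z S r p \<longleftrightarrow> p \<in> S \<and> (\<forall>s\<in>S. ipS n N lam Z (psub r p) s = 0)"

definition projS :: "nat \<Rightarrow> nat \<Rightarrow> real \<Rightarrow> (nat \<Rightarrow> 'z) \<Rightarrow> 'z elt set \<Rightarrow> 'z elt \<Rightarrow> 'z elt" where
  "projS n N lam Z S r = (SOME p. isProj n N lam Z S r p)"

definition perpS :: "nat \<Rightarrow> nat \<Rightarrow> real \<Rightarrow> (nat \<Rightarrow> 'z) \<Rightarrow> 'z elt set \<Rightarrow> 'z elt \<Rightarrow> 'z elt" where
  "perpS n N lam Z S r = psub r (projS n N lam Z S r)"

definition embF :: "('x \<Rightarrow> real) \<Rightarrow> ('x \<times> 'w) elt" where
  "embF \<psi> = ((\<lambda>z. \<psi> (fst z)), (\<lambda>z. 0))"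

definition embG :: "('x \<times> 'w \<Rightarrow> real) \<Rightarrow> ('x \<times> 'w) elt" where
  "embG \<phi> = ((\<lambda>z. 0), \<phi>)"

definition L2PN_sq :: "nat \<Rightarrow> (nat \<Rightarrow> 'z) \<Rightarrow> ('z \<Rightarrow> real) \<Rightarrow> real" where
  "L2PN_sq N Z h = (1 / real N) * (\<Sum>i<N. (h (Z i))^2)"

definition ratioS :: "nat \<Rightarrow> nat \<Rightarrow> real \<Rightarrow> (nat \<Rightarrow> 'z) \<Rightarrow> 'z elt set \<Rightarrow> 'z elt \<Rightarrow> 'z elt \<Rightarrow> real" where
  "ratioS n N lam Z S r a =
     ipS n N lam Z r (perpS n N lam Z S a) / normS n N lam Z (perpS n N lam Z S a)"

definition isArgmax :: "nat \<Rightarrow> nat \<Rightarrow> real \<Rightarrow> (nat \<Rightarrow> 'z) \<Rightarrow> 'z elt set \<Rightarrow> 'z elt \<Rightarrow> 'z elt set \<Rightarrow> 'z elt \<Rightarrow> bool" where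
  "isArgmax n N lam Z S r D a \<longleftrightarrow>
     a \<in> D \<and> normS n N lam Z (perpS n N lam Z S a) > 0 \<and>
     (\<forall>b\<in>D. normS n N lam Z (perpS n N lam Z S b) > 0 \<longrightarrow>
              ratioS n N lam Z S r b \<le> ratioS n N lam Z S r a)"

text \<open>Quantities of Algorithm 1: spans S_k^f, S_k^g, residuals r_k and r_k^(g),
with target T = (Y,Y) and iterates FG k = (f_k, g_k).\<close>
definition SfA :: "(nat \<Rightarrow> 'x \<Rightarrow> real) \<Rightarrow> nat \<Rightarrow> ('x \<times> 'w) elt set" where
  "SfA \<psi> k = spanL (map (\<lambda>i. embF (\<psi> i)) [1..<Suc k])"

definition SgA :: "(nat \<Rightarrow> 'x \<times> 'w \<Rightarrow> real) \<Rightarrow> nat \<Rightarrow> ('x \<times> 'w) elt set" where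
  "SgA \<phi> k = spanL (map (\<lambda>i. embG (\<phi> i)) [1..<Suc k])"

definition resA :: "('z \<Rightarrow> real) \<Rightarrow> (nat \<Rightarrow> 'z elt) \<Rightarrow> nat \<Rightarrow> 'z elt" where
  "resA Y FG k = psub (Y, Y) (FG (k - 1))"

definition resgA :: "nat \<Rightarrow> nat \<Rightarrow> real \<Rightarrow> (nat \<Rightarrow> 'x \<times> 'w) \<Rightarrow> ('x \<times> 'w \<Rightarrow> real)
    \<Rightarrow> (nat \<Rightarrow> 'x \<Rightarrow> real) \<Rightarrow> (nat \<Rightarrow> ('x \<times> 'w) elt) \<Rightarrow> nat \<Rightarrow> ('x \<times> 'w) elt" where
  "resgA n N lam Z Y \<psi> FG k =
     psub (resA Y FG k) (projS n N lam Z (SfA \<psi> k) (resA Y FG k))"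

end

theory Submission
  imports Defs
begin

definition psc :: "real \<Rightarrow> 'z elt \<Rightarrow> 'z elt" where
  "psc t u = ((\<lambda>z. t * fst u z), (\<lambda>z. t * snd u z))"

context
  fixes n N :: nat and lam :: real and Z :: "nat \<Rightarrow> 'z"
  assumes lam: "lam \<ge> 0"
begin

abbreviation ip :: "'z elt \<Rightarrow> 'z elt \<Rightarrow> real" where "ip \<equiv> ipS n N lam Z"

lemma ip_sym: "ip u v = ip v u"
  by (simp add: ipS_def mult.commute)

lemma ip_add: "ip (padd u v) w = ip u w + ip v w"
proof -
  have e: "\<And>a b c d e f::real. (a + b - (c + d)) * (e - f) = (a - c)*(e-f) + (b - d)*(e-f)" by algebra
  show ?thesis unfolding ipS_def padd_def fst_conv snd_conv e distrib_right sum.distrib by (simp add: ring_distribs)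
qed

lemma ip_sub: "ip (psub u v) w = ip u w - ip v w"
proof -
  have e: "\<And>a b c d e f::real. (a - b - (c - d)) * (e - f) = (a - c)*(e-f) - (b - d)*(e-f)" by algebra
  show ?thesis unfolding ipS_def psub_def fst_conv snd_conv e left_diff_distrib sum_subtractf by (simp add: ring_distribs)
qed

lemma ip_sc: "ip (psc t u) w = t * ip u w"
  by (simp add: ipS_def psc_def algebra_simps sum_distrib_left)

lemma ip_add2: "ip w (padd u v) = ip w u + ip w v"
  by (metis ip_sym ip_add)

lemma ip_sub2: "ip w (psub u v) = ip w u - ip w v"
  by (metis ip_sym ip_sub)

lemma ip_sc2: "ip w (psc t u) = t * ip w u"
  by (metis ip_sym ip_sc)

lemma ip_nonneg: "ip u u \<ge> 0"
proof -
  have a: "(\<Sum>i<n. fst u (Z i) * fst u (Z i)) \<ge> 0" by (rule sum_nonneg) simp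
  have b: "(\<Sum>j\<in>{n..<N}. (fst u (Z j) - snd u (Z j)) * (fst u (Z j) - snd u (Z j))) \<ge> 0" by (rule sum_nonneg) simp
  have c: "(\<Sum>i<n. snd u (Z i) * snd u (Z i)) \<ge> 0" by (rule sum_nonneg) simp
  show ?thesis unfolding ipS_def using a b c lam by simp
qed

lemma ip_expand: "ip (psub u (psc t v)) (psub u (psc t v)) = ip u u - 2*t*ip u v + t^2 * ip v v"
  by (simp add: ip_sub ip_sub2 ip_sc ip_sc2 ip_sym[of v u] power2_eq_square algebra_simps)

lemma ip_CS_sq: "(ip u v)^2 \<le> ip u u * ip v v"
proof (cases "ip v v = 0")
  case True
  show ?thesis
  proof (rule ccontr)
    assume "\<not> ?thesis"
    then have ne: "ip u v \<noteq> 0" using True by simp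
    define t where "t = (ip u u + 1) / (2 * ip u v)"
    have "0 \<le> ip u u - 2*t*ip u v + t^2 * ip v v"
      using ip_nonneg[of "psub u (psc t v)"] ip_expand by simp
    also have "\<dots> = -1" using True ne by (simp add: t_def field_simps)
    finally show False by simp
  qed
next
  case False
  then have pos: "ip v v > 0" using ip_nonneg[of v] by simp
  define t where "t = ip u v / ip v v"
  have "0 \<le> ip u u - 2*t*ip u v + t^2 * ip v v"
    using ip_nonneg[of "psub u (psc t v)"] ip_expand by simp
  also have "\<dots> = ip u u - (ip u v)^2 / ip v v"
    using pos by (simp add: t_def power2_eq_square field_simps)
  finally have "(ip u v)^2 / ip v v \<le> ip u u" by simp
  then show ?thesis using pos by (simp add: divide_le_eq mult.commute)
qed

lemma ip_CS: "ip u v \<le> normS n N lam Z u * normS n N lam Z v"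
proof -
  have "\<bar>ip u v\<bar> = sqrt ((ip u v)^2)" by simp
  also have "\<dots> \<le> sqrt (ip u u * ip v v)" by (rule real_sqrt_le_mono[OF ip_CS_sq])
  also have "\<dots> = normS n N lam Z u * normS n N lam Z v" by (simp add: normS_def real_sqrt_mult)
  finally show ?thesis by simp
qed

lemma ip_null: "ip v v = 0 \<Longrightarrow> ip u v = 0"
  using ip_CS_sq[of u v] by simp


lemma lincomb_append: "lincomb c (vs @ [w]) = padd (lincomb c vs) (psc (c (length vs)) w)"
proof -
  have "\<And>f :: nat \<Rightarrow> real. (\<Sum>i<length (vs @ [w]). f i) = (\<Sum>i<length vs. f i) + f (length vs)"
    by simp
  then show ?thesis
    by (simp add: lincomb_def padd_def psc_def nth_append)
qed

lemma span_mono: "x \<in> spanL vs \<Longrightarrow> x \<in> spanL (vs @ [w])"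
proof -
  assume "x \<in> spanL vs"
  then obtain c where x: "x = lincomb c vs" by (auto simp: spanL_def)
  have "lincomb (c(length vs := 0)) (vs @ [w]) = padd (lincomb (c(length vs := 0)) vs) (psc 0 w)"
    using lincomb_append[of "c(length vs := 0)" vs w] by simp
  also have "lincomb (c(length vs := 0)) vs = lincomb c vs"
    unfolding lincomb_def by (auto intro!: sum.cong)
  finally have "lincomb (c(length vs := 0)) (vs @ [w]) = x"
    by (simp add: x padd_def psc_def fun_upd_def)
  then show ?thesis unfolding spanL_def by (metis (mono_tags, lifting) mem_Collect_eq)
qed

lemma span_last: "w \<in> spanL (vs @ [w])"
proof -
  define c where "c = (\<lambda>i::nat. if i = length vs then (1::real) else 0)"
  have "lincomb c (vs @ [w]) = padd (lincomb c vs) (psc (c (length vs)) w)"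
    by (rule lincomb_append)
  also have "lincomb c vs = ((\<lambda>z. 0), (\<lambda>z. 0))"
    unfolding lincomb_def c_def by auto
  finally have "lincomb c (vs @ [w]) = w" by (simp add: padd_def psc_def c_def)
  then show ?thesis unfolding spanL_def by (metis (mono_tags, lifting) mem_Collect_eq)
qed

lemma span_add: "x \<in> spanL vs \<Longrightarrow> y \<in> spanL vs \<Longrightarrow> padd x y \<in> spanL vs"
proof -
  assume "x \<in> spanL vs" "y \<in> spanL vs"
  then obtain c d where "x = lincomb c vs" "y = lincomb d vs" by (auto simp: spanL_def)
  then have "padd x y = lincomb (\<lambda>i. c i + d i) vs"
    by (simp add: lincomb_def padd_def distrib_right sum.distrib)
  then show ?thesis unfolding spanL_def by (metis (mono_tags, lifting) mem_Collect_eq)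
qed

lemma span_sc: "x \<in> spanL vs \<Longrightarrow> psc t x \<in> spanL vs"
proof -
  assume "x \<in> spanL vs"
  then obtain c where "x = lincomb c vs" by (auto simp: spanL_def)
  then have "psc t x = lincomb (\<lambda>i. t * c i) vs"
    by (simp add: lincomb_def psc_def sum_distrib_left mult.assoc)
  then show ?thesis unfolding spanL_def by (metis (mono_tags, lifting) mem_Collect_eq)
qed

lemma span_sub: "x \<in> spanL vs \<Longrightarrow> y \<in> spanL vs \<Longrightarrow> psub x y \<in> spanL vs"
proof -
  assume "x \<in> spanL vs" "y \<in> spanL vs"
  then have "padd x (psc (-1) y) \<in> spanL vs" by (intro span_add span_sc)
  moreover have "padd x (psc (-1) y) = psub x y" by (simp add: padd_def psc_def psub_def)
  ultimately show ?thesis by simp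
qed

lemma span_decomp: "x \<in> spanL (vs @ [w]) \<Longrightarrow> \<exists>s t. s \<in> spanL vs \<and> x = padd s (psc t w)"
  unfolding spanL_def using lincomb_append by blast

lemma proj_exists: "\<exists>p. isProj n N lam Z (spanL vs) r p"
proof (induction vs arbitrary: r rule: rev_induct)
  case Nil
  have "lincomb (\<lambda>i. 0) [] \<in> spanL []" unfolding spanL_def by blast
  moreover have "\<forall>s\<in>spanL []. ip (psub r (lincomb (\<lambda>i. 0) [])) s = 0"
    by (auto simp: spanL_def lincomb_def ipS_def)
  ultimately show ?case unfolding isProj_def by blast
next
  case (snoc w vs)
  define S where "S = spanL vs"
  define P where "P = (\<lambda>x. SOME p. isProj n N lam Z S x p)"
  have PP: "isProj n N lam Z S x (P x)" for x
    unfolding P_def S_def using snoc.IH by (rule someI_ex)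
  define pr where "pr = P r"
  define pw where "pw = P w"
  define u where "u = psub w pw"
  have pr: "pr \<in> S" "\<And>s. s \<in> S \<Longrightarrow> ip (psub r pr) s = 0"
    using PP[of r] unfolding isProj_def pr_def by auto
  have pw: "pw \<in> S" "\<And>s. s \<in> S \<Longrightarrow> ip u s = 0"
    using PP[of w] unfolding isProj_def pw_def u_def by auto
  have wu: "w = padd u pw" by (simp add: u_def padd_def psub_def)
  have uS: "u \<in> spanL (vs @ [w])"
    unfolding u_def by (intro span_sub span_last span_mono) (use pw S_def in auto)
  have w1: "ip (psub r pr) w = ip (psub r pr) u + ip (psub r pr) pw"
    by (subst wu) (rule ip_add2)
  have w2: "ip u w = ip u u + ip u pw"
    using ip_add2[of u u pw] by (simp add: wu[symmetric])
  have prS: "pr \<in> spanL (vs @ [w])" using pr(1) unfolding S_def by (rule span_mono)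
  show ?case
  proof (cases "ip u u = 0")
    case True
    have "ip (psub r pr) x = 0" if x: "x \<in> spanL (vs @ [w])" for x
    proof -
      obtain s t where st: "s \<in> S" "x = padd s (psc t w)" using span_decomp[OF x] S_def by auto
      have "ip (psub r pr) x = ip (psub r pr) s + t * (ip (psub r pr) u + ip (psub r pr) pw)"
        by (simp add: st ip_add2 ip_sc2 w1)
      also have "\<dots> = 0" using pr(2)[OF st(1)] pr(2)[OF pw(1)] ip_null[OF True] by simp
      finally show ?thesis .
    qed
    then show ?thesis unfolding isProj_def using prS by blast
  next
    case False
    define c where "c = ip (psub r pr) u / ip u u"
    define p where "p = padd pr (psc c u)"
    have pS: "p \<in> spanL (vs @ [w])" unfolding p_def using prS uS by (intro span_add span_sc)
    have rp: "psub r p = psub (psub r pr) (psc c u)" by (simp add: p_def psub_def padd_def psc_def algebra_simps)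
    have "ip (psub r p) x = 0" if x: "x \<in> spanL (vs @ [w])" for x
    proof -
      obtain s t where st: "s \<in> S" "x = padd s (psc t w)" using span_decomp[OF x] S_def by auto
      have "ip (psub r p) x = ip (psub r pr) s - c * ip u s
          + t * ((ip (psub r pr) u + ip (psub r pr) pw) - c * (ip u u + ip u pw))"
        unfolding rp st(2) by (simp only: ip_sub[of "psub r pr" "psc c u"] ip_add2 ip_sc2 ip_sc w1 w2)
      also have "\<dots> = 0" using pr(2)[OF st(1)] pr(2)[OF pw(1)] pw(2)[OF st(1)] pw(2)[OF pw(1)] False
        by (simp add: c_def)
      finally show ?thesis .
    qed
    then show ?thesis unfolding isProj_def using pS by blast
  qed
qed

lemma projS_isProj: "isProj n N lam Z (spanL vs) r (projS n N lam Z (spanL vs) r)"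
  unfolding projS_def by (rule someI_ex[OF proj_exists])


lemma key:
  assumes wpos: "normS n N lam Z (perpS n N lam Z (spanL vs) w) > 0"
    and arg: "normS n N lam Z (perpS n N lam Z (spanL vs) a) > 0 \<longrightarrow>
              ratioS n N lam Z (spanL vs) r a \<le> ratioS n N lam Z (spanL vs) r w"
  shows "ip r a \<le> normS n N lam Z (projS n N lam Z (spanL (vs @ [w])) r) * normS n N lam Z a"
proof -
  define S where "S = spanL vs"
  define S' where "S' = spanL (vs @ [w])"
  define pa where "pa = projS n N lam Z S a"
  define q where "q = psub a pa"
  define pw where "pw = projS n N lam Z S w"
  define u where "u = psub w pw"
  define p' where "p' = projS n N lam Z S' r"
  let ?nm = "normS n N lam Z"
  have PA: "pa \<in> S" "\<And>s. s \<in> S \<Longrightarrow> ip q s = 0"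
    using projS_isProj[of vs a] unfolding isProj_def pa_def q_def S_def by auto
  have PW: "pw \<in> S" "\<And>s. s \<in> S \<Longrightarrow> ip u s = 0"
    using projS_isProj[of vs w] unfolding isProj_def pw_def u_def S_def by auto
  have P': "p' \<in> S'" "\<And>s. s \<in> S' \<Longrightarrow> ip (psub r p') s = 0"
    using projS_isProj[of "vs @ [w]" r] unfolding isProj_def p'_def S'_def by auto
  have SS': "\<And>x. x \<in> S \<Longrightarrow> x \<in> S'" unfolding S_def S'_def by (rule span_mono)
  have uS': "u \<in> S'" unfolding u_def S'_def
    by (intro span_sub span_last span_mono) (use PW(1) S_def in auto)
  have e1: "ip r pa = ip p' pa" using P'(2)[OF SS'[OF PA(1)]] by (simp add: ip_sub)
  have e2: "ip r u = ip p' u" using P'(2)[OF uS'] by (simp add: ip_sub)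
  have aq: "a = padd pa q" by (simp add: q_def padd_def psub_def)
  have qpa: "ip q pa = 0" using PA by simp
  have upa: "ip pa u = 0" using PW(2)[OF PA(1)] by (simp add: ip_sym)
  have ra: "ip r a = ip r pa + ip r q" by (subst aq) (rule ip_add2)
  have aa: "ip a a = ip pa pa + ip q q"
  proof -
    have "ip a a = ip (padd pa q) (padd pa q)" using aq by simp
    also have "\<dots> = ip pa pa + 2 * ip q pa + ip q q"
      by (simp add: ip_add ip_add2 ip_sym[of pa q])
    finally show ?thesis using qpa by simp
  qed
  have nu: "?nm u > 0" using wpos unfolding u_def pw_def perpS_def S_def by simp
  then have uu: "ip u u > 0" unfolding normS_def by simp
  have comb: "ip r a \<le> ?nm p' * ?nm a" if tq: "t^2 * ip u u = ip q q" and rq: "ip r q \<le> t * ip p' u" for t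
  proof -
    define v where "v = padd pa (psc t u)"
    have "ip v v = ip pa pa + 2 * t * ip pa u + t^2 * ip u u"
      by (simp add: v_def ip_add ip_add2 ip_sc ip_sc2 ip_sym[of u pa] power2_eq_square algebra_simps)
    then have vv: "ip v v = ip a a" using upa tq aa by simp
    have "ip r a \<le> ip p' pa + t * ip p' u" using ra e1 rq by simp
    also have "\<dots> = ip p' v" by (simp add: v_def ip_add2 ip_sc2)
    also have "\<dots> \<le> ?nm p' * ?nm v" by (rule ip_CS)
    also have "?nm v = ?nm a" using vv by (simp add: normS_def)
    finally show ?thesis .
  qed
  have "ip r a \<le> ?nm p' * ?nm a"
  proof (cases "ip q q = 0")
    case True
    have "ip r q = 0" using ip_null[OF True] .
    then show ?thesis using comb[of 0] True by simp
  next
    case False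
    then have qq: "ip q q > 0" using ip_nonneg[of q] by simp
    then have nq: "?nm q > 0" by (simp add: normS_def)
    have "ratioS n N lam Z S r a \<le> ratioS n N lam Z S r w"
      using arg nq unfolding q_def pa_def perpS_def S_def by simp
    then have "ip r q / ?nm q \<le> ip r u / ?nm u"
      unfolding ratioS_def perpS_def q_def pa_def u_def pw_def by simp
    then have rq: "ip r q \<le> (ip p' u / ?nm u) * ?nm q"
      using nq e2 by (simp add: divide_le_eq)
    define t0 where "t0 = ?nm q / ?nm u"
    have t0sq: "t0^2 * ip u u = ip q q"
      using nu uu qq ip_nonneg[of q] by (simp add: t0_def normS_def power_divide)
    show ?thesis
    proof (cases "ip p' u \<ge> 0")
      case True
      have "ip r q \<le> t0 * ip p' u" using rq by (simp add: t0_def mult.commute)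
      then show ?thesis using comb t0sq by blast
    next
      case False
      have "(ip p' u / ?nm u) * ?nm q \<le> (- t0) * ip p' u"
        using False nu nq mult_pos_neg[of "?nm q" "ip p' u"] by (simp add: t0_def field_simps)
      then have "ip r q \<le> (- t0) * ip p' u" using rq by linarith
      moreover have "(- t0)^2 * ip u u = ip q q" using t0sq by simp
      ultimately show ?thesis using comb by blast
    qed
  qed
  then show ?thesis by (simp add: p'_def S'_def)
qed
end

theorem lemmaC4:
  fixes lam :: real and n m K :: nat
    and Z :: "nat \<Rightarrow> 'x \<times> 'w" and y :: "nat \<Rightarrow> real" and Y :: "'x \<times> 'w \<Rightarrow> real"
    and Df :: "('x \<Rightarrow> real) set" and Dg :: "('x \<times> 'w \<Rightarrow> real) set"
    and \<psi> :: "nat \<Rightarrow> 'x \<Rightarrow> real" and \<phi> :: "nat \<Rightarrow> 'x \<times> 'w \<Rightarrow> real"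
    and FG :: "nat \<Rightarrow> ('x \<times> 'w) elt"
  assumes lam: "lam \<ge> 0" and n: "n \<ge> 1" and m: "m \<ge> 1"
    and labels: "\<forall>i<n. Y (Z i) = y i"
    and Df_fin: "finite Df" and Dg_fin: "finite Dg"
    and Df_norm: "\<forall>h\<in>Df. L2PN_sq (n + m) Z (\<lambda>z. h (fst z)) \<le> 1"
    and Dg_norm: "\<forall>h\<in>Dg. L2PN_sq (n + m) Z h \<le> 1"
    and neg_closed: "\<forall>a\<in>embF ` Df \<union> embG ` Dg. \<exists>c\<in>embF ` Df \<union> embG ` Dg.
                        normS n (n + m) lam Z (padd a c) = 0"
    and init: "FG 0 = pzero"
    and choose_f: "\<forall>k\<in>{1..K}. isArgmax n (n + m) lam Z (SfA \<psi> (k - 1)) (resA Y FG k)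
                                  (embF ` Df) (embF (\<psi> k))"
    and choose_g: "\<forall>k\<in>{1..K}. isArgmax n (n + m) lam Z (SgA \<phi> (k - 1))
                                  (resgA n (n + m) lam Z Y \<psi> FG k) (embG ` Dg) (embG (\<phi> k))"
    and update: "\<forall>k\<in>{1..K}. FG k =
                   padd (padd (FG (k - 1)) (projS n (n + m) lam Z (SfA \<psi> k) (resA Y FG k)))
                        (projS n (n + m) lam Z (SgA \<phi> k) (resgA n (n + m) lam Z Y \<psi> FG k))"
  shows "\<forall>k\<in>{1..K}.
           Sup ((\<lambda>a. ipS n (n + m) lam Z (resA Y FG k) a) ` embF ` Df)
             \<le> max 1 (sqrt lam) * normS n (n + m) lam Z (projS n (n + m) lam Z (SfA \<psi> k) (resA Y FG k)) \<and>
           Sup ((\<lambda>b. ipS n (n + m) lam Z (resA Y FG k) b) ` embG ` Dg)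
             \<le> max 1 (sqrt lam) * normS n (n + m) lam Z (projS n (n + m) lam Z (SfA \<psi> k) (resA Y FG k))
               + max 1 (sqrt lam) * normS n (n + m) lam Z
                   (projS n (n + m) lam Z (SgA \<phi> k) (resgA n (n + m) lam Z Y \<psi> FG k))"
proof
  fix k assume kK: "k \<in> {1..K}"
  then have k1: "1 \<le> k" by simp
  define N where "N = n + m"
  define R where "R = max 1 (sqrt lam)"
  have R1: "R \<ge> 1" unfolding R_def by simp
  define vf :: "('x \<times> 'w) elt list" where "vf = map (\<lambda>i. embF (\<psi> i)) [1..<k]"
  define vg where "vg = map (\<lambda>i. embG (\<phi> i)) [1..<k]"
  have upt: "[1..<Suc k] = [1..<k] @ [k]" using k1 by simp
  have Sf: "SfA \<psi> k = spanL (vf @ [embF (\<psi> k)])" "SfA \<psi> (k - 1) = spanL vf"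
    unfolding SfA_def vf_def using upt k1 by auto
  have Sg: "SgA \<phi> k = spanL (vg @ [embG (\<phi> k)])" "SgA \<phi> (k - 1) = spanL vg"
    unfolding SgA_def vg_def using upt k1 by auto
  define r where "r = resA Y FG k"
  define p' where "p' = projS n N lam Z (SfA \<psi> k) r"
  define rg where "rg = resgA n N lam Z Y \<psi> FG k"
  define pg where "pg = projS n N lam Z (SgA \<phi> k) rg"
  define \<alpha> where "\<alpha> = normS n N lam Z p'"
  define \<beta> where "\<beta> = normS n N lam Z pg"
  have a0: "\<alpha> \<ge> 0" unfolding \<alpha>_def normS_def using ip_nonneg[OF lam, of n N Z p'] by simp
  have b0: "\<beta> \<ge> 0" unfolding \<beta>_def normS_def using ip_nonneg[OF lam, of n N Z pg] by simp
  have split: "(\<Sum>i<N. f i) = (\<Sum>i<n. f i) + (\<Sum>i\<in>{n..<N}. f i)" for f :: "nat \<Rightarrow> real"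
    using sum.atLeastLessThan_concat[of 0 n N f] by (simp add: N_def lessThan_atLeast0)
  have Npos: "real N > 0" using n by (simp add: N_def)
  have normF: "normS n N lam Z (embF h) \<le> 1" if "h \<in> Df" for h
  proof -
    have "ipS n N lam Z (embF h) (embF h) = L2PN_sq N Z (\<lambda>z. h (fst z))"
      unfolding ipS_def embF_def L2PN_sq_def split by (simp add: power2_eq_square algebra_simps)
    also have "\<dots> \<le> 1" using Df_norm that by (simp add: N_def)
    finally show ?thesis unfolding normS_def by simp
  qed
  have normG: "normS n N lam Z (embG h) \<le> R" if "h \<in> Dg" for h
  proof -
    define A where "A = (\<Sum>i<n. (h (Z i))^2)"
    define B where "B = (\<Sum>i\<in>{n..<N}. (h (Z i))^2)"
    have A0: "A \<ge> 0" unfolding A_def by (rule sum_nonneg) simp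
    have B0: "B \<ge> 0" unfolding B_def by (rule sum_nonneg) simp
    have L: "L2PN_sq N Z h = (A + B) / real N"
      unfolding L2PN_sq_def split A_def B_def by simp
    have L0: "L2PN_sq N Z h \<le> 1" using Dg_norm that by (simp add: N_def)
    have L1: "(A + B) / real N \<le> 1" using L0 unfolding L .
    have "ipS n N lam Z (embG h) (embG h) = (B + lam * A) / real N"
      unfolding ipS_def embG_def A_def B_def by (simp add: power2_eq_square algebra_simps add_divide_distrib)
    also have "\<dots> \<le> max 1 lam * ((A + B) / real N)"
    proof -
      have m1: "1 * B \<le> max 1 lam * B" by (rule mult_right_mono) (simp_all add: B0)
      have m2: "lam * A \<le> max 1 lam * A" by (rule mult_right_mono) (simp_all add: A0)
      have "B + lam * A \<le> max 1 lam * (A + B)" using m1 m2 by (simp add: distrib_left)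
      then have "(B + lam * A) / real N \<le> (max 1 lam * (A + B)) / real N"
        using Npos by (intro divide_right_mono) auto
      then show ?thesis by simp
    qed
    also have "\<dots> \<le> max 1 lam" using L1
      by (intro mult_left_le) auto
    finally have "sqrt (ipS n N lam Z (embG h) (embG h)) \<le> sqrt (max 1 lam)" by simp
    also have "sqrt (max 1 lam) = R" unfolding R_def
      by (cases "lam \<le> 1") (auto simp: max_def)
    finally show ?thesis unfolding normS_def .
  qed
  have Ff: "ipS n N lam Z r a \<le> \<alpha> * normS n N lam Z a" if a: "a \<in> embF ` Df" for a
  proof -
    have am: "isArgmax n N lam Z (spanL vf) r (embF ` Df) (embF (\<psi> k))"
      using bspec[OF choose_f kK] Sf(2) unfolding N_def r_def by simp
    show ?thesis unfolding \<alpha>_def p'_def Sf(1)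
      by (rule key[OF lam]) (use am a in \<open>auto simp: isArgmax_def\<close>)
  qed
  have Gg: "ipS n N lam Z rg b \<le> \<beta> * normS n N lam Z b" if b: "b \<in> embG ` Dg" for b
  proof -
    have am: "isArgmax n N lam Z (spanL vg) rg (embG ` Dg) (embG (\<phi> k))"
      using bspec[OF choose_g kK] Sg(2) unfolding N_def rg_def by simp
    show ?thesis unfolding \<beta>_def pg_def Sg(1)
      by (rule key[OF lam]) (use am b in \<open>auto simp: isArgmax_def\<close>)
  qed
  have rg_eq: "rg = psub r p'" unfolding rg_def resgA_def r_def p'_def by simp
  have ne1: "embF ` Df \<noteq> {}" using choose_f kK unfolding isArgmax_def by auto
  have ne2: "embG ` Dg \<noteq> {}" using choose_g kK unfolding isArgmax_def by auto
  have A: "Sup ((\<lambda>a. ipS n N lam Z r a) ` embF ` Df) \<le> R * \<alpha>"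
  proof (rule cSup_least)
    show "(\<lambda>a. ipS n N lam Z r a) ` embF ` Df \<noteq> {}" using ne1 by simp
  next
    fix x assume "x \<in> (\<lambda>a. ipS n N lam Z r a) ` embF ` Df"
    then obtain h where h: "h \<in> Df" and x: "x = ipS n N lam Z r (embF h)" by auto
    have "x \<le> \<alpha> * normS n N lam Z (embF h)" using Ff h x by auto
    also have "\<dots> \<le> \<alpha> * 1" using normF[OF h] a0 by (intro mult_left_mono) auto
    also have "\<dots> \<le> R * \<alpha>" using mult_right_mono[OF R1 a0] by simp
    finally show "x \<le> R * \<alpha>" .
  qed
  have B: "Sup ((\<lambda>b. ipS n N lam Z r b) ` embG ` Dg) \<le> R * \<alpha> + R * \<beta>"
  proof (rule cSup_least)
    show "(\<lambda>b. ipS n N lam Z r b) ` embG ` Dg \<noteq> {}" using ne2 by simp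
  next
    fix x assume "x \<in> (\<lambda>b. ipS n N lam Z r b) ` embG ` Dg"
    then obtain h where h: "h \<in> Dg" and x: "x = ipS n N lam Z r (embG h)" by auto
    have "x = ipS n N lam Z rg (embG h) + ipS n N lam Z p' (embG h)"
      using x rg_eq ip_sub[OF lam, of n N Z r p' "embG h"] by simp
    also have "\<dots> \<le> \<beta> * normS n N lam Z (embG h) + \<alpha> * normS n N lam Z (embG h)"
      using Gg[of "embG h"] h ip_CS[OF lam, of n N Z p' "embG h"] unfolding \<alpha>_def by auto
    also have "\<dots> \<le> \<beta> * R + \<alpha> * R"
      using normG[OF h] a0 b0 by (intro add_mono mult_left_mono) auto
    finally show "x \<le> R * \<alpha> + R * \<beta>" by (simp add: mult.commute add.commute)
  qed
  show "Sup ((\<lambda>a. ipS n (n + m) lam Z (resA Y FG k) a) ` embF ` Df)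
             \<le> max 1 (sqrt lam) * normS n (n + m) lam Z (projS n (n + m) lam Z (SfA \<psi> k) (resA Y FG k)) \<and>
           Sup ((\<lambda>b. ipS n (n + m) lam Z (resA Y FG k) b) ` embG ` Dg)
             \<le> max 1 (sqrt lam) * normS n (n + m) lam Z (projS n (n + m) lam Z (SfA \<psi> k) (resA Y FG k))
               + max 1 (sqrt lam) * normS n (n + m) lam Z
                   (projS n (n + m) lam Z (SgA \<phi> k) (resgA n (n + m) lam Z Y \<psi> FG k))"
    using A B unfolding N_def R_def \<alpha>_def \<beta>_def p'_def pg_def rg_def r_def by simp
qed

end
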